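(* In the setting described in the context, if $s>m^{2^r}$, then $\mathrm{IN}_s(X)\setminus\triangle^{(s)}(X)=\emptyset$.
   Context: Let $r\geq 2$, $G=\mathbb Z^r$ with standard basis $e_1,\dots,e_r$. For each $j$, let $(p_j^i)_{i}$ be strictly increasing positive integers with $p_j^i\mid p_j^{i+1}$, $p_j^i>2i+1$, and $\Gamma_i=\langle p_j^ie_j:1\le j\le r\rangle$, with $[\Gamma_i:\Gamma_{i+1}]>1/(1-2^{-(1/2)^{i+1}})$. Let $D_i\subseteq\mathbb Z^r$ be fundamental domains of $\mathbb Z^r/\Gamma_i$ of the form $\{x: -q^i_{1,j}\le x_j<q^i_{2,j}\}$ with $q^i_{1,j},q^i_{2,j}>i$, $q^i_{1,j}+q^i_{2,j}=p^i_j$, $0\in D_i\subseteq D_{i+1}$, $\bigcup_iD_i=\mathbb Z^r$, $D_i=\bigcup_{\gamma\in D_i\cap\Gamma_{i-1}}(\gamma+D_{i-1})$ for $i\ge2$. Let $m\ge2$, $\Sigma=\{1,\dots,m\}$, $\alpha_i\in\Sigma$ with $\alpha_i\equiv i\pmod m$. Define $\eta\in\Sigma^{\mathbb Z^r}$ by $J(0)=\{0\}$, $\eta=\alpha_1$ on $\Gamma_1$, and for $k\ge1$, $J(k)=D_k\setminus\bigcup_{i=0}^{k-1}(J(i)+\Gamma_{i+1})$, $\eta(\gamma+h)=\alpha_{k+1}$ for $h\in J(k),\gamma\in\Gamma_{k+1}$. $X$ is the closure of the shift orbit of $\eta$ (shift $\sigma^g(x)(h)=x(h-g)$). $\mathrm{IN}_s(X)$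 is the set of $(x_1,\dots,x_s)\in X^s$ such that for every product neighborhood $U_1\times\dots\times U_s$, $(U_1,\dots,U_s)$ has arbitrarily large finite independence sets, where $J\subseteq\mathbb Z^r$ is an independence set if $\bigcap_{g\in I}\sigma^{-g}U_{t(g)}\ne\emptyset$ for all nonempty finite $I\subseteq J$ and $t:I\to\{1,\dots,s\}$. $\triangle^{(s)}(X)=\{(x_1,\dots,x_s): x_i=x_j\text{ for some } i\ne j\}$. *)

theory Defs
  imports "HOL-Analysis.Analysis"
begin

text \<open>Points of Z^r are vectors of type int^'r with r = CARD('r).
  Configurations in Sigma^(Z^r) are functions (int^'r) => nat with values in {1..m};
  the function space carries the product topology (nat discrete).\<close>

definition sumset :: "('a::plus) set \<Rightarrow> 'a set \<Rightarrow> 'a set" where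
  "sumset A B = {a + b | a b. a \<in> A \<and> b \<in> B}"

definition Gam :: "('r \<Rightarrow> nat \<Rightarrow> int) \<Rightarrow> nat \<Rightarrow> (int^'r) set" where
  "Gam p i = {x. \<forall>j. p j i dvd x $ j}"

definition Dom :: "('r \<Rightarrow> nat \<Rightarrow> int) \<Rightarrow> ('r \<Rightarrow> nat \<Rightarrow> int) \<Rightarrow> nat \<Rightarrow> (int^'r) set" where
  "Dom q1 q2 i = {x. \<forall>j. - q1 j i \<le> x $ j \<and> x $ j < q2 j i}"

text \<open>JU k = (J(k), union_{i<=k} (J(i) + Gamma_{i+1}))\<close>
fun JU :: "('r \<Rightarrow> nat \<Rightarrow> int) \<Rightarrow> ('r \<Rightarrow> nat \<Rightarrow> int) \<Rightarrow> ('r \<Rightarrow> nat \<Rightarrow> int) \<Rightarrow> nat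
           \<Rightarrow> (int^'r) set \<times> (int^'r) set" where
  "JU p q1 q2 0 = ({0}, sumset (Gam p 1) {0})"
| "JU p q1 q2 (Suc k) =
     (let Jk = Dom q1 q2 (Suc k) - snd (JU p q1 q2 k)
      in (Jk, snd (JU p q1 q2 k) \<union> sumset (Gam p (Suc k + 1)) Jk))"

definition Jset :: "('r \<Rightarrow> nat \<Rightarrow> int) \<Rightarrow> ('r \<Rightarrow> nat \<Rightarrow> int) \<Rightarrow> ('r \<Rightarrow> nat \<Rightarrow> int) \<Rightarrow> nat
           \<Rightarrow> (int^'r) set" where
  "Jset p q1 q2 k = fst (JU p q1 q2 k)"

text \<open>eta(gamma + h) = alpha_{k+1} for h in J(k), gamma in Gamma_{k+1} (k >= 0; k = 0 gives
  eta = alpha_1 on Gamma_1). These sets are pairwise disjoint, so we take the unique such k.\<close>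
definition toeplitz_eta :: "('r \<Rightarrow> nat \<Rightarrow> int) \<Rightarrow> ('r \<Rightarrow> nat \<Rightarrow> int) \<Rightarrow> ('r \<Rightarrow> nat \<Rightarrow> int)
      \<Rightarrow> (nat \<Rightarrow> nat) \<Rightarrow> (int^'r) \<Rightarrow> nat" where
  "toeplitz_eta p q1 q2 \<alpha> x =
     \<alpha> (Suc (LEAST k. \<exists>\<gamma>\<in>Gam p (k + 1). \<exists>h\<in>Jset p q1 q2 k. x = \<gamma> + h))"

definition shift :: "(int^'r) \<Rightarrow> ((int^'r) \<Rightarrow> 'a) \<Rightarrow> ((int^'r) \<Rightarrow> 'a)" where
  "shift g x = (\<lambda>h. x (h - g))"

definition orbit_closure :: "((int^'r) \<Rightarrow> nat) \<Rightarrow> ((int^'r) \<Rightarrow> nat) set" where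
  "orbit_closure \<eta> = closure (range (\<lambda>g. shift g \<eta>))"

text \<open>J is an independence set for (U_0,...,U_{s-1}) (0-indexed; U_i subsets of X):
  for every nonempty finite I \<subseteq> J and t : I -> {0..s-1},
  the intersection over g in I of sigma^{-g} U_{t(g)} (preimages inside X) is nonempty.\<close>
definition indep_set :: "((int^'r) \<Rightarrow> nat) set \<Rightarrow> (nat \<Rightarrow> ((int^'r) \<Rightarrow> nat) set) \<Rightarrow> nat
      \<Rightarrow> (int^'r) set \<Rightarrow> bool" where
  "indep_set X U s J \<longleftrightarrow>
     (\<forall>I t. I \<subseteq> J \<and> finite I \<and> I \<noteq> {} \<and> t \<in> I \<rightarrow> {..<s} \<longrightarrow>
        (\<Inter>g\<in>I. {y \<in> X. shift g y \<in> U (t g)}) \<noteq> {})"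

text \<open>IN_s(X), s-tuples represented as extensional functions on {0..<s}.\<close>
definition IN_tuples :: "nat \<Rightarrow> ((int^'r) \<Rightarrow> nat) set \<Rightarrow> (nat \<Rightarrow> ((int^'r) \<Rightarrow> nat)) set" where
  "IN_tuples s X = {x \<in> {..<s} \<rightarrow>\<^sub>E X.
     \<forall>U. (\<forall>i<s. openin (top_of_set X) (U i) \<and> x i \<in> U i) \<longrightarrow>
         (\<forall>N::nat. \<exists>J. finite J \<and> N \<le> card J \<and> indep_set X U s J)}"

definition diag_tuples :: "nat \<Rightarrow> (nat \<Rightarrow> 'a) set" where
  "diag_tuples s = {x. \<exists>i<s. \<exists>j<s. i \<noteq> j \<and> x i = x j}"

end

theory Submission
  imports Defs
begin

lemma open_eval: "open {f :: 'a \<Rightarrow> nat. f w = v}"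
proof -
  have c: "continuous_on UNIV (\<lambda>f::'a\<Rightarrow>nat. f w)" by simp
  have "open ((\<lambda>f::'a\<Rightarrow>nat. f w) -` {v} \<inter> UNIV)"
    using continuous_on_open_vimage[of UNIV "\<lambda>f::'a\<Rightarrow>nat. f w", THEN iffD1, OF open_UNIV c, rule_format, of "{v}"]
      open_discrete[of "{v::nat}"] by simp
  then show ?thesis by (simp add: vimage_def)
qed

lemma closed_eval: "closed {f :: 'a \<Rightarrow> nat. f w \<in> B}"
proof -
  have "closed B" unfolding closed_def using open_discrete[of "- B"] by blast
  have c: "continuous_on UNIV (\<lambda>f::'a\<Rightarrow>nat. f w)" by simp
  have "closed ((\<lambda>f::'a\<Rightarrow>nat. f w) -` B \<inter> UNIV)"
    using continuous_on_closed_vimage[of UNIV "\<lambda>f::'a\<Rightarrow>nat. f w", THEN iffD1, OF closed_UNIV c, rule_format, of B]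
      \<open>closed B\<close> by simp
  then show ?thesis by (simp add: vimage_def)
qed

lemma open_cyl: assumes "finite W" shows "open {f :: 'a \<Rightarrow> nat. \<forall>w\<in>W. f w = v w}"
proof -
  have "{f :: 'a \<Rightarrow> nat. \<forall>w\<in>W. f w = v w} = (\<Inter>w\<in>W. {f. f w = v w})" by auto
  moreover have "open (\<Inter>w\<in>W. {f :: 'a \<Rightarrow> nat. f w = v w})"
    by (intro open_INT assms ballI open_eval)
  ultimately show ?thesis by simp
qed

lemma coord_arith:
  fixes P M a a' z :: int
  assumes P: "0 < P" "2 * M < P" and a: "\<bar>a\<bar> \<le> M" "\<bar>a'\<bar> \<le> M"
    and same: "((a + z) mod P - a \<noteq> z mod P) = ((a' + z) mod P - a' \<noteq> z mod P)"
  shows "(a + z) mod P - a = (a' + z) mod P - a'"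
proof -
  define d1 where "d1 = (a + z) div P - z div P"
  define d2 where "d2 = (a' + z) div P - z div P"
  have e1: "(a + z) mod P - a - z mod P = - (P * d1)"
    unfolding d1_def using div_mult_mod_eq[of "a + z" P] div_mult_mod_eq[of z P]
    by (simp add: algebra_simps)
  have e2: "(a' + z) mod P - a' - z mod P = - (P * d2)"
    unfolding d2_def using div_mult_mod_eq[of "a' + z" P] div_mult_mod_eq[of z P]
    by (simp add: algebra_simps)
  have b1: "0 \<le> (a + z) mod P" "(a + z) mod P < P" "0 \<le> (a' + z) mod P" "(a' + z) mod P < P"
    "0 \<le> z mod P" "z mod P < P" using P by auto
  have "P * d1 < 2 * P" "- (2 * P) < P * d1" using e1 b1 a P by linarith+
  then have x1: "P * d1 < P * 2" and x2: "P * (-2) < P * d1" by linarith+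
  have "d1 < 2" using mult_less_cancel_left_pos[OF P(1), THEN iffD1, OF x1] .
  moreover have "-2 < d1" using mult_less_cancel_left_pos[OF P(1), THEN iffD1, OF x2] .
  ultimately have d1: "d1 = -1 \<or> d1 = 0 \<or> d1 = 1" by linarith
  have "P * d2 < 2 * P" "- (2 * P) < P * d2" using e2 b1 a P by linarith+
  then have x1: "P * d2 < P * 2" and x2: "P * (-2) < P * d2" by linarith+
  have "d2 < 2" using mult_less_cancel_left_pos[OF P(1), THEN iffD1, OF x1] .
  moreover have "-2 < d2" using mult_less_cancel_left_pos[OF P(1), THEN iffD1, OF x2] .
  ultimately have d2: "d2 = -1 \<or> d2 = 0 \<or> d2 = 1" by linarith
  have a2: "a \<le> M" "-M \<le> a" "a' \<le> M" "-M \<le> a'" using a by auto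
  have n1: False if "(a+z) mod P - a - z mod P = P" "(a'+z) mod P - a' - z mod P = -P"
    using that b1 a2 P by linarith
  have n2: False if "(a+z) mod P - a - z mod P = -P" "(a'+z) mod P - a' - z mod P = P"
    using that b1 a2 P by linarith
  show ?thesis using d1 d2 e1 e2 same n1 n2 by auto
qed


locale toep =
  fixes p q1 q2 :: "'r::finite \<Rightarrow> nat \<Rightarrow> int"
    and m :: nat and \<alpha> :: "nat \<Rightarrow> nat"
  assumes p_pos: "\<And>j i. i \<ge> 1 \<Longrightarrow> p j i > 0"
    and p_incr: "\<And>j i. i \<ge> 1 \<Longrightarrow> p j i < p j (i + 1)"
    and p_dvd: "\<And>j i. i \<ge> 1 \<Longrightarrow> p j i dvd p j (i + 1)"
    and p_big: "\<And>j i. i \<ge> 1 \<Longrightarrow> p j i > 2 * int i + 1"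
    and q1_big: "\<And>j i. i \<ge> 1 \<Longrightarrow> q1 j i > int i"
    and q2_big: "\<And>j i. i \<ge> 1 \<Longrightarrow> q2 j i > int i"
    and q_sum: "\<And>j i. i \<ge> 1 \<Longrightarrow> q1 j i + q2 j i = p j i"
    and D_mono: "\<And>i. i \<ge> 1 \<Longrightarrow> Dom q1 q2 i \<subseteq> Dom q1 q2 (i + 1)"
    and D_union: "(\<Union>i\<in>{1..}. Dom q1 q2 i) = UNIV"
    and D_tile: "\<And>i. i \<ge> 2 \<Longrightarrow>
       Dom q1 q2 i = (\<Union>\<gamma>\<in>Dom q1 q2 i \<inter> Gam p (i - 1). sumset {\<gamma>} (Dom q1 q2 (i - 1)))"
    and m2: "m \<ge> 2"
    and alpha_range: "\<And>i. i \<ge> 1 \<Longrightarrow> \<alpha> i \<in> {1..m}"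
    and alpha_mod: "\<And>i. i \<ge> 1 \<Longrightarrow> \<alpha> i mod m = i mod m"
begin

abbreviation "G \<equiv> Gam p"
abbreviation "D \<equiv> Dom q1 q2"

lemma G_iff: "x \<in> G i \<longleftrightarrow> (\<forall>j. p j i dvd x $ j)"
  by (simp add: Gam_def)
lemma D_iff: "x \<in> D i \<longleftrightarrow> (\<forall>j. - q1 j i \<le> x $ j \<and> x $ j < q2 j i)"
  by (simp add: Dom_def)

lemma G_add: "x \<in> G i \<Longrightarrow> y \<in> G i \<Longrightarrow> x + y \<in> G i"
  by (auto simp: G_iff)
lemma G_diff: "x \<in> G i \<Longrightarrow> y \<in> G i \<Longrightarrow> x - y \<in> G i"
  by (auto simp: G_iff)
lemma G_uminus: "x \<in> G i \<Longrightarrow> - x \<in> G i"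
  by (auto simp: G_iff)
lemma G_zero[simp]: "0 \<in> G i"
  by (auto simp: G_iff)

lemma p_dvd_le: assumes "1 \<le> a" "a \<le> b" shows "p j a dvd p j b"
  using assms(2)
proof (induction b rule: dec_induct)
  case base then show ?case by simp
next
  case (step n) then show ?case using p_dvd[of n j] assms(1) by (auto intro: dvd_trans)
qed

lemma G_mono: assumes "1 \<le> a" "a \<le> b" shows "G b \<subseteq> G a"
proof
  fix x assume "x \<in> G b"
  then show "x \<in> G a" unfolding G_iff using p_dvd_le[OF assms] dvd_trans by blast
qed

definition R :: "nat \<Rightarrow> int^'r \<Rightarrow> int^'r" where
  "R k x = (\<chi> l. (x$l + q1 l k) mod p l k - q1 l k)"

lemma R_D: "k \<ge> 1 \<Longrightarrow> R k x \<in> D k"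
  using p_pos q_sum by (auto simp: D_iff R_def) (smt (verit) Euclidean_Rings.pos_mod_bound)

lemma R_G: "k \<ge> 1 \<Longrightarrow> x - R k x \<in> G k"
proof -
  have "p l k dvd x$l - ((x$l + q1 l k) mod p l k - q1 l k)" for l
  proof -
    have "x$l - ((x$l + q1 l k) mod p l k - q1 l k) = (x$l + q1 l k) - (x$l + q1 l k) mod p l k" by simp
    then show ?thesis by (metis dvd_minus_mod)
  qed
  then show ?thesis by (simp add: G_iff R_def)
qed

lemma D_uniq: assumes "k \<ge> 1" "d \<in> D k" "d' \<in> D k" "d - d' \<in> G k" shows "d = d'"
proof -
  have "d$l = d'$l" for l
  proof -
    from assms have a: "- q1 l k \<le> d $ l" "d $ l < q2 l k" "- q1 l k \<le> d' $ l" "d' $ l < q2 l k"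
      by (auto simp: D_iff)
    from assms obtain t where t: "d$l - d'$l = p l k * t" by (auto simp: G_iff)
    have pk: "p l k = q1 l k + q2 l k" using q_sum assms by simp
    have "\<bar>p l k * t\<bar> < p l k" using a t pk by linarith
    then have "t = 0" using p_pos[OF assms(1)]
      by (smt (verit) mult_le_cancel_left1 mult_minus_right mult_less_cancel_left_pos)
    then show ?thesis using t by simp
  qed
  then show ?thesis by (simp add: vec_eq_iff)
qed

lemma R_unique: "k \<ge> 1 \<Longrightarrow> d \<in> D k \<Longrightarrow> x - d \<in> G k \<Longrightarrow> R k x = d"
proof -
  assume a: "k \<ge> 1" "d \<in> D k" "x - d \<in> G k"
  have "R k x - d = (x - d) - (x - R k x)" by simp
  then have "R k x - d \<in> G k" using G_diff[OF a(3) R_G[OF a(1), of x]] by simp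
  then show ?thesis using D_uniq[of k "R k x" d] R_D a by blast
qed


lemma zero_D: "i \<ge> 1 \<Longrightarrow> 0 \<in> D i"
  using q1_big q2_big by (auto simp: D_iff) (smt (verit) of_nat_0_le_iff)+

definition A :: "nat \<Rightarrow> (int^'r) set" where
  "A i = (if i = 0 then G 1 else {d + g | d g. d \<in> D i \<and> g \<in> G (Suc i)})"

lemma A_intro: assumes "i \<ge> 1" "d \<in> D i" "g \<in> G (Suc i)" shows "d + g \<in> A i"
proof -
  have "d + g \<in> {d + g | d g. d \<in> D i \<and> g \<in> G (Suc i)}" using assms by blast
  then show ?thesis using assms by (simp add: A_def)
qed

lemma A_per: assumes "g \<in> G (Suc i)" shows "(x + g \<in> A i) = (x \<in> A i)"
proof (cases "i = 0")
  case True
  have "x = (x + g) - g" by simp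
  then show ?thesis using assms True G_add G_diff unfolding A_def by (metis One_nat_def)
next
  case False
  show ?thesis
  proof
    assume "x + g \<in> A i"
    then obtain d g' where "d \<in> D i" "g' \<in> G (Suc i)" "x + g = d + g'" using False by (auto simp: A_def)
    then have "x = d + (g' - g)" "g' - g \<in> G (Suc i)" using G_diff assms by (auto simp: algebra_simps)
    then show "x \<in> A i" using False \<open>d \<in> D i\<close> A_intro[of i d "g' - g"] by simp
  next
    assume "x \<in> A i"
    then obtain d g' where "d \<in> D i" "g' \<in> G (Suc i)" "x = d + g'" using False by (auto simp: A_def)
    then have "x + g = d + (g' + g)" "g' + g \<in> G (Suc i)" using G_add assms by (auto simp: algebra_simps)
    then show "x + g \<in> A i" using False \<open>d \<in> D i\<close> A_intro[of i d "g' + g"] by (simp add: add.assoc)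
  qed
qed

lemma A_per2: assumes "g \<in> G (Suc K)" "i \<le> K" shows "(x + g \<in> A i) = (x \<in> A i)"
proof -
  have "g \<in> G (Suc i)" using G_mono[of "Suc i" "Suc K"] assms by auto
  then show ?thesis by (rule A_per)
qed

lemma D_sub_A: "i \<ge> 1 \<Longrightarrow> d \<in> D i \<Longrightarrow> d \<in> A i"
  using A_intro[of i d 0] by simp

lemma A_R: assumes "i \<ge> 1" shows "(u \<in> A i) = (R (Suc i) u = R i u)"
proof
  assume "u \<in> A i"
  then obtain d g where dg: "d \<in> D i" "g \<in> G (Suc i)" "u = d + g" using assms by (auto simp: A_def)
  have "d \<in> D (Suc i)" using D_mono assms dg by auto
  then have 1: "R (Suc i) u = d" using R_unique[of "Suc i" d u] dg by auto
  have "g \<in> G i" using G_mono[of i "Suc i"] assms dg by auto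
  then have 2: "R i u = d" using R_unique[of i d u] dg assms by auto
  show "R (Suc i) u = R i u" using 1 2 by simp
next
  assume a: "R (Suc i) u = R i u"
  have "u = R (Suc i) u + (u - R (Suc i) u)" by simp
  moreover have "R (Suc i) u \<in> D i" using a R_D assms by simp
  moreover have "u - R (Suc i) u \<in> G (Suc i)" using R_G by simp
  ultimately show "u \<in> A i" using assms A_intro[of i "R (Suc i) u" "u - R (Suc i) u"] by simp
qed

definition exact :: "int^'r \<Rightarrow> nat \<Rightarrow> bool" where
  "exact x j \<longleftrightarrow> x \<in> A j \<and> (\<forall>i<j. x \<notin> A i)"

lemma exact_per: assumes "g \<in> G (Suc K)" "j \<le> K" shows "exact (x + g) j = exact x j"
  unfolding exact_def using A_per2[OF assms(1)] assms(2) by auto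

lemma ex_A: "\<exists>k. x \<in> A k"
proof -
  have "x \<in> (\<Union>i\<in>{1..}. D i)" using D_union by simp
  then obtain i where "i \<ge> 1" "x \<in> D i" by auto
  then show ?thesis using D_sub_A by blast
qed

lemma exact_ex: "\<exists>j. exact x j"
proof -
  obtain k where "x \<in> A k" using ex_A by blast
  then have "x \<in> A (LEAST k. x \<in> A k)" "\<forall>i<(LEAST k. x \<in> A k). x \<notin> A i"
    by (auto intro: LeastI dest: not_less_Least)
  then show ?thesis unfolding exact_def by blast
qed

lemma exact_uniq: "exact x j \<Longrightarrow> exact x j' \<Longrightarrow> j = j'"
  unfolding exact_def by (metis linorder_neqE_nat)

definition T :: "nat \<Rightarrow> (int^'r) set" where
  "T k = {\<gamma> + h | \<gamma> h. \<gamma> \<in> G (k + 1) \<and> h \<in> Jset p q1 q2 k}"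

lemma S_T: "snd (JU p q1 q2 K) = (\<Union>i\<le>K. T i)"
proof (induction K)
  case 0
  show ?case by (auto simp: T_def Jset_def sumset_def)
next
  case (Suc K)
  show ?case using Suc by (auto simp: T_def Jset_def sumset_def Let_def atMost_Suc)
qed

lemma S_A: "snd (JU p q1 q2 K) = (\<Union>i\<le>K. A i)"
proof (induction K)
  case 0
  show ?case by (auto simp: A_def sumset_def)
next
  case (Suc K)
  let ?S = "snd (JU p q1 q2 K)"
  have "snd (JU p q1 q2 (Suc K)) = ?S \<union> sumset (G (Suc K + 1)) (D (Suc K) - ?S)"
    by (simp add: Let_def)
  also have "\<dots> = ?S \<union> A (Suc K)"
  proof
    show "?S \<union> sumset (G (Suc K + 1)) (D (Suc K) - ?S) \<subseteq> ?S \<union> A (Suc K)"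
      using A_intro[of "Suc K"] by (auto simp: sumset_def) (metis add.commute)
  next
    show "?S \<union> A (Suc K) \<subseteq> ?S \<union> sumset (G (Suc K + 1)) (D (Suc K) - ?S)"
    proof
      fix x assume "x \<in> ?S \<union> A (Suc K)"
      moreover
      { assume "x \<in> A (Suc K)"
        then obtain d g where dg: "d \<in> D (Suc K)" "g \<in> G (Suc (Suc K))" "x = d + g" by (auto simp: A_def)
        have "x \<in> ?S \<union> sumset (G (Suc K + 1)) (D (Suc K) - ?S)"
        proof (cases "d \<in> ?S")
          case True
          then obtain i where "i \<le> K" "d \<in> A i" using Suc by auto
          then have "d + g \<in> A i" using A_per2[OF dg(2), of i d] by auto
          then show ?thesis using Suc \<open>i \<le> K\<close> dg by auto
        next
          case False
          then show ?thesis using dg by (auto simp: sumset_def add.commute)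
        qed }
      ultimately show "x \<in> ?S \<union> sumset (G (Suc K + 1)) (D (Suc K) - ?S)" by blast
    qed
  qed
  finally show ?case using Suc by (simp add: atMost_Suc Un_commute)
qed

abbreviation "eta \<equiv> toeplitz_eta p q1 q2 \<alpha>"

lemma eta_exact: assumes "exact x j" shows "eta x = \<alpha> (Suc j)"
proof -
  have TA: "(\<Union>i\<le>K. T i) = (\<Union>i\<le>K. A i)" for K using S_T S_A by metis
  have e: "(\<exists>\<gamma>\<in>Gam p (k + 1). \<exists>h\<in>Jset p q1 q2 k. x = \<gamma> + h) = (x \<in> T k)" for k
    by (auto simp: T_def)
  have "x \<in> (\<Union>i\<le>j. A i)" using assms by (auto simp: exact_def)
  then obtain i where i: "i \<le> j" "x \<in> T i" using TA[of j] by auto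
  have no: "x \<notin> T i'" if "i' < j" for i'
  proof
    assume "x \<in> T i'"
    then have "x \<in> (\<Union>i\<le>i'. A i)" using TA[of i'] by auto
    then show False using assms that by (auto simp: exact_def)
  qed
  have "x \<in> T j" using i no by (metis le_neq_implies_less)
  then have "(LEAST k. x \<in> T k) = j" using no by (intro Least_equality) (auto simp: not_less[symmetric])
  then show ?thesis unfolding toeplitz_eta_def e by simp
qed


lemma hole: "\<exists>\<rho>. exact \<rho> j \<and> (j \<ge> 1 \<longrightarrow> \<rho> \<in> D j)"
proof (induction j)
  case 0
  show ?case by (rule exI[of _ 0]) (simp add: exact_def A_def)
next
  case (Suc j)
  show ?case
  proof (cases "j = 0")
    case True
    define l0 :: 'r where "l0 = undefined"
    define \<rho> :: "int^'r" where "\<rho> = (\<chi> l. if l = l0 then 1 else 0)"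
    have "\<rho> \<in> D 1" using q1_big[of 1] q2_big[of 1] by (auto simp: D_iff \<rho>_def) (smt (verit))+
    moreover have "\<rho> \<notin> G 1"
    proof
      assume "\<rho> \<in> G 1"
      then have "p l0 1 dvd \<rho> $ l0" by (simp add: G_iff)
      moreover have "\<rho> $ l0 = 1" by (simp add: \<rho>_def)
      ultimately have "p l0 1 dvd 1" by simp
      then have "p l0 1 \<le> 1" using zdvd_imp_le[of "p l0 1" 1] by simp
      then show False using p_big[of 1 l0] by simp
    qed
    ultimately show ?thesis using True D_sub_A[of 1 \<rho>] by (auto simp: exact_def A_def)
  next
    case False
    then have j1: "j \<ge> 1" by simp
    obtain \<rho> where r: "exact \<rho> j" "\<rho> \<in> D j" using Suc j1 by blast
    define l0 :: 'r where "l0 = undefined"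
    define \<gamma>0 :: "int^'r" where "\<gamma>0 = (\<chi> l. if l = l0 then p l0 j else 0)"
    have g0: "\<gamma>0 \<in> G j" by (auto simp: G_iff \<gamma>0_def)
    have g0n: "\<gamma>0 \<notin> G (Suc j)"
    proof
      assume "\<gamma>0 \<in> G (Suc j)"
      then have "p l0 (Suc j) dvd \<gamma>0 $ l0" unfolding G_iff by blast
      moreover have "\<gamma>0 $ l0 = p l0 j" by (simp add: \<gamma>0_def)
      ultimately have "p l0 (Suc j) dvd p l0 j" by simp
      then show False using p_pos[OF j1, of l0] p_incr[OF j1, of l0] by (smt (verit) Suc_eq_plus1 zdvd_imp_le)
    qed
    define w where "w = R (Suc j) \<gamma>0"
    have wD: "w \<in> D (Suc j)" using R_D w_def by simp
    have wn: "w \<notin> D j"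
    proof
      assume wj: "w \<in> D j"
      have "w = \<gamma>0 - (\<gamma>0 - w)" by simp
      moreover have "\<gamma>0 - w \<in> G j" using R_G[of "Suc j" \<gamma>0] G_mono[of j "Suc j"] j1 w_def by auto
      ultimately have "w \<in> G j" using G_diff g0 by metis
      then have "w = 0" using D_uniq[OF j1 wj zero_D[OF j1]] by simp
      then show False using R_G[of "Suc j" \<gamma>0] g0n w_def by simp
    qed
    have tile: "D (Suc j) = (\<Union>\<gamma>\<in>D (Suc j) \<inter> G j. sumset {\<gamma>} (D j))"
      using D_tile[of "Suc j"] j1 by simp
    have "w \<in> (\<Union>\<gamma>\<in>D (Suc j) \<inter> G j. sumset {\<gamma>} (D j))" using wD tile by blast
    then obtain \<gamma> d where gd: "\<gamma> \<in> D (Suc j)" "\<gamma> \<in> G j" "d \<in> D j" "w = \<gamma> + d"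
      unfolding sumset_def by blast
    have gnz: "\<gamma> \<noteq> 0" using gd wn by auto
    define \<rho>' where "\<rho>' = \<gamma> + \<rho>"
    have r'D: "\<rho>' \<in> D (Suc j)" using tile gd r(2) unfolding \<rho>'_def sumset_def by blast
    have "exact \<rho>' (Suc j)"
      unfolding exact_def
    proof (intro conjI allI impI)
      show "\<rho>' \<in> A (Suc j)" using r'D D_sub_A by simp
      fix i assume "i < Suc j"
      then consider "i < j" | "i = j" by linarith
      then show "\<rho>' \<notin> A i"
      proof cases
        case 1
        have "\<gamma> \<in> G (Suc (j - 1))" using gd j1 by simp
        then have "(\<rho> + \<gamma> \<in> A i) = (\<rho> \<in> A i)" using A_per2[of \<gamma> "j - 1" i \<rho>] 1 by simp
        then show ?thesis using r(1) 1 by (simp add: exact_def \<rho>'_def add.commute)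
      next
        case 2
        show ?thesis
        proof
          assume "\<rho>' \<in> A i"
          then obtain d' g' where dg: "d' \<in> D j" "g' \<in> G (Suc j)" "\<rho>' = d' + g'"
            using 2 j1 by (auto simp: A_def)
          have "d' - \<rho> = \<gamma> - g'" using dg(3) \<rho>'_def by (simp add: algebra_simps)
          moreover have "\<gamma> - g' \<in> G j" using G_diff gd(2) dg(2) G_mono[of j "Suc j"] j1 by auto
          ultimately have "d' = \<rho>" using D_uniq[OF j1 dg(1) r(2)] by simp
          then have "\<gamma> = g'" using dg(3) \<rho>'_def by simp
          then have "\<gamma> = 0" using D_uniq[of "Suc j" \<gamma> 0] gd(1) zero_D[of "Suc j"] dg(2) by simp
          then show False using gnz by simp
        qed
      qed
    qed
    then show ?thesis using r'D by blast
  qed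
qed

definition Off :: "((int^'r) \<Rightarrow> nat) \<Rightarrow> nat \<Rightarrow> int^'r \<Rightarrow> bool" where
  "Off y k c \<longleftrightarrow> (\<forall>x j. j \<le> k \<longrightarrow> exact x j \<longrightarrow> y (x + c) = \<alpha> (Suc j))"

lemma Off_mono: "Off y (Suc k) c \<Longrightarrow> Off y k c"
  unfolding Off_def by auto

lemma Off_class: assumes "Off y k c" "c' - c \<in> G (Suc k)" shows "Off y k c'"
  unfolding Off_def
proof (intro allI impI)
  fix x j assume j: "j \<le> k" "exact x j"
  have "exact (x + (c' - c)) j" using exact_per[OF assms(2) j(1)] j(2) by simp
  then have "y (x + (c' - c) + c) = \<alpha> (Suc j)" using assms(1) j(1) unfolding Off_def by blast
  then show "y (x + c') = \<alpha> (Suc j)" by (simp add: algebra_simps)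
qed

lemma Off_eta: "Off (shift c eta) k c"
  unfolding Off_def shift_def using eta_exact by simp

lemma Off_shift: "Off y k c \<Longrightarrow> Off (shift g y) k (c + g)"
  unfolding Off_def shift_def by (simp add: add.assoc[symmetric])

lemma alpha_ne: "\<alpha> (Suc j) \<noteq> \<alpha> (Suc (Suc j))"
proof
  assume "\<alpha> (Suc j) = \<alpha> (Suc (Suc j))"
  then have "Suc j mod m = Suc (Suc j) mod m" using alpha_mod[of "Suc j"] alpha_mod[of "Suc (Suc j)"] by simp
  then have "m dvd Suc (Suc j) - Suc j" using mod_eq_dvd_iff_nat[of "Suc j" "Suc (Suc j)" m] by simp
  then show False using m2 by simp
qed

lemma loc:
  assumes y: "Off y k c" and z: "Off z (Suc k) d" and agree: "\<forall>w\<in>D (Suc (Suc k)). y w = z w"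
  shows "c - d \<in> G (Suc k)"
proof (rule ccontr)
  define e where "e = c - d"
  assume "c - d \<notin> G (Suc k)"
  then have ek: "e \<notin> G (Suc k)" using e_def by simp
  define j where "j = (LEAST j. e \<notin> G (Suc j))"
  have ej: "e \<notin> G (Suc j)" using ek unfolding j_def by (rule LeastI)
  have jk: "j \<le> k" using ek unfolding j_def by (rule Least_le)
  have ebelow: "e \<in> G j" if "j \<ge> 1"
  proof -
    have "\<not> (e \<notin> G (Suc (j - 1)))" using not_less_Least[of "j - 1" "\<lambda>j. e \<notin> G (Suc j)"] that j_def by simp
    then show ?thesis using that by simp
  qed
  obtain \<rho> where r: "exact \<rho> j" "j \<ge> 1 \<longrightarrow> \<rho> \<in> D j" using hole by blast
  define x where "x = R (Suc j) (\<rho> + e) - e"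
  have xr: "x - \<rho> \<in> G (Suc j)"
  proof -
    have "x - \<rho> = - ((\<rho> + e) - R (Suc j) (\<rho> + e))" unfolding x_def by (simp add: algebra_simps)
    moreover have "(\<rho> + e) - R (Suc j) (\<rho> + e) \<in> G (Suc j)" using R_G by simp
    ultimately show ?thesis using G_uminus by metis
  qed
  have ex: "exact x j"
  proof -
    have "exact (\<rho> + (x - \<rho>)) j" using exact_per[OF xr, of j \<rho>] r(1) by simp
    then show ?thesis by simp
  qed
  have xeD: "x + e \<in> D (Suc j)" unfolding x_def using R_D by simp
  have exe: "exact (x + e) (Suc j)"
    unfolding exact_def
  proof (intro conjI allI impI)
    show "x + e \<in> A (Suc j)" using xeD D_sub_A by simp
    fix i assume "i < Suc j"
    then consider "i < j" | "i = j" by linarith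
    then show "x + e \<notin> A i"
    proof cases
      case 1
      then have j1: "j \<ge> 1" by simp
      have "e \<in> G (Suc (j - 1))" using ebelow j1 by simp
      then have "(x + e \<in> A i) = (x \<in> A i)" using A_per2[of e "j - 1" i x] 1 by simp
      then show ?thesis using ex 1 by (simp add: exact_def)
    next
      case 2
      show ?thesis
      proof (cases "j = 0")
        case True
        show ?thesis
        proof
          assume "x + e \<in> A i"
          then have "x + e \<in> G 1" using 2 True by (simp add: A_def)
          moreover have "x \<in> G 1" using ex True by (simp add: exact_def A_def)
          ultimately have "(x + e) - x \<in> G 1" by (rule G_diff)
          then show False using ej True by simp
        qed
      next
        case False
        then have j1: "j \<ge> 1" by simp
        show ?thesis
        proof
          assume "x + e \<in> A i"
          then have "R (Suc j) (x + e) = R j (x + e)" using A_R[OF j1] 2 by simp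
          moreover have "R (Suc j) (x + e) = x + e" using R_unique[of "Suc j" "x + e" "x + e"] xeD by simp
          ultimately have xej: "x + e \<in> D j" using R_D[OF j1] by metis
          have "(x + e) - \<rho> = (x - \<rho>) + e" by simp
          moreover have "x - \<rho> \<in> G j" using xr G_mono[of j "Suc j"] j1 by auto
          ultimately have "(x + e) - \<rho> \<in> G j" using G_add ebelow[OF j1] by metis
          then have "x + e = \<rho>" using D_uniq[OF j1 xej] r(2) j1 by simp
          then have "e = - (x - \<rho>)" by (simp add: algebra_simps)
          then have "e \<in> G (Suc j)" using G_uminus[OF xr] by simp
          then show False using ej by simp
        qed
      qed
    qed
  qed
  define \<gamma>0 where "\<gamma>0 = R (Suc (Suc k)) (x + c) - (x + c)"
  have g0: "\<gamma>0 \<in> G (Suc (Suc k))"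
  proof -
    have "(x + c) - R (Suc (Suc k)) (x + c) \<in> G (Suc (Suc k))" using R_G by simp
    from G_uminus[OF this] show ?thesis unfolding \<gamma>0_def minus_diff_eq .
  qed
  define x' where "x' = x + \<gamma>0"
  have ex': "exact x' j" unfolding x'_def using exact_per[OF g0, of j x] ex jk by simp
  have exe': "exact (x' + e) (Suc j)"
    using exact_per[OF g0, of "Suc j" "x + e"] exe jk unfolding x'_def by (simp add: algebra_simps)
  have x'c: "x' + c \<in> D (Suc (Suc k))" unfolding x'_def \<gamma>0_def using R_D by simp
  have a1: "y (x' + c) = \<alpha> (Suc j)" using y ex' jk unfolding Off_def by blast
  have a2: "z ((x' + e) + d) = \<alpha> (Suc (Suc j))" using z exe' jk unfolding Off_def by blast
  have a3: "(x' + e) + d = x' + c" unfolding e_def by simp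
  have a4: "y (x' + c) = z (x' + c)" using agree x'c by blast
  have a5: "z (x' + c) = \<alpha> (Suc (Suc j))" using a2 unfolding a3 .
  have "\<alpha> (Suc j) = \<alpha> (Suc (Suc j))" using a1 a4 a5 by simp
  then show False using alpha_ne[of j] by blast
qed


lemma finite_D: assumes "k \<ge> 1" shows "finite (D k)"
proof -
  have "D k \<subseteq> (\<lambda>f. vec_lambda f) ` (PiE UNIV (\<lambda>l. {-q1 l k..<q2 l k}))"
  proof
    fix x assume "x \<in> D k"
    then have "(\<lambda>l. x $ l) \<in> PiE UNIV (\<lambda>l. {-q1 l k..<q2 l k})" by (auto simp: D_iff)
    moreover have "x = vec_lambda (\<lambda>l. x $ l)" by simp
    ultimately show "x \<in> (\<lambda>f. vec_lambda f) ` (PiE UNIV (\<lambda>l. {-q1 l k..<q2 l k}))" by blast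
  qed
  moreover have "finite (PiE UNIV (\<lambda>l::'r. {-q1 l k..<q2 l k}))" by (rule finite_PiE) auto
  ultimately show ?thesis using finite_subset by blast
qed

abbreviation "X \<equiv> orbit_closure eta"

lemma closed_X: "closed X"
  unfolding orbit_closure_def by (rule closed_closure)

lemma orbit_X: "shift g eta \<in> X"
  unfolding orbit_closure_def by (rule subsetD[OF closure_subset rangeI])

lemma X_approx: assumes "y \<in> X" "finite W" shows "\<exists>c. \<forall>w\<in>W. y w = shift c eta w"
proof -
  let ?S = "{f. \<forall>w\<in>W. f w = y w}"
  have "open ?S" by (rule open_cyl[OF assms(2)])
  moreover have "y \<in> ?S" by simp
  moreover have "y \<in> closure (range (\<lambda>g. shift g eta))" using assms(1) unfolding orbit_closure_def .
  ultimately have "range (\<lambda>g. shift g eta) \<inter> ?S \<noteq> {}"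
    using closure_iff_nhds_not_empty[THEN iffD1, rule_format, of y "range (\<lambda>g. shift g eta)" ?S ?S] by blast
  then obtain g where "shift g eta \<in> ?S" by blast
  then show ?thesis by (intro exI[of _ g]) auto
qed

lemma X_vals: assumes "y \<in> X" shows "y h \<in> {1..m}"
proof -
  have "eta x \<in> {1..m}" for x unfolding toeplitz_eta_def using alpha_range by simp
  then have "range (\<lambda>g. shift g eta) \<subseteq> {f. f h \<in> {1..m}}" by (auto simp: shift_def)
  then have "X \<subseteq> {f. f h \<in> {1..m}}" unfolding orbit_closure_def
    by (rule closure_minimal[OF _ closed_eval])
  then show ?thesis using assms by blast
qed

lemma X_Off: assumes "y \<in> X" shows "\<exists>c. Off y k c"
proof -
  let ?Z = "\<Union>c\<in>D (Suc k). {y. Off y k c}"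
  have cl: "closed {y. Off y k c}" for c
  proof -
    have "{y. Off y k c} = (\<Inter>xj\<in>{(x, j). j \<le> k \<and> exact x j}. {y. y (fst xj + c) \<in> {\<alpha> (Suc (snd xj))}})"
      unfolding Off_def by auto
    moreover have "closed (\<Inter>xj\<in>{(x, j). j \<le> k \<and> exact x j}. {y. y (fst xj + c) \<in> {\<alpha> (Suc (snd xj))}})"
    proof -
      have ce: "closed {y :: int^'r \<Rightarrow> nat. y (fst xj + c) \<in> {\<alpha> (Suc (snd xj))}}" for xj :: "(int^'r) \<times> nat"
        by (rule closed_eval[of "fst xj + c" "{\<alpha> (Suc (snd xj))}"])
      have "\<forall>xj\<in>{(x, j). j \<le> k \<and> exact x j}. closed {y :: int^'r \<Rightarrow> nat. y (fst xj + c) \<in> {\<alpha> (Suc (snd xj))}}"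
        using ce by blast
      then show ?thesis by (rule closed_INT)
    qed
    ultimately show ?thesis by simp
  qed
  have "closed ?Z" using finite_D[of "Suc k"] cl by (intro closed_UN) auto
  moreover have "range (\<lambda>g. shift g eta) \<subseteq> ?Z"
  proof
    fix f assume "f \<in> range (\<lambda>g. shift g eta)"
    then obtain g where g: "f = shift g eta" by blast
    have "g - R (Suc k) g \<in> G (Suc k)" using R_G by simp
    from G_uminus[OF this] have "R (Suc k) g - g \<in> G (Suc k)" by simp
    from Off_class[OF Off_eta[of g k] this] have "Off f k (R (Suc k) g)" unfolding g .
    moreover have "R (Suc k) g \<in> D (Suc k)" using R_D by simp
    ultimately show "f \<in> ?Z" by blast
  qed
  ultimately have "X \<subseteq> ?Z" unfolding orbit_closure_def by (rule closure_minimal[rotated])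
  then show ?thesis using assms by blast
qed


lemma R_step: assumes i1: "i \<ge> 1" and eq: "R i u - R i u' = u - u'"
  shows "R (Suc i) u - R (Suc i) u' = u - u'"
proof -
  have tile: "D (Suc i) = (\<Union>\<gamma>\<in>D (Suc i) \<inter> G i. sumset {\<gamma>} (D i))"
    using D_tile[of "Suc i"] i1 by simp
  have "R (Suc i) u \<in> (\<Union>\<gamma>\<in>D (Suc i) \<inter> G i. sumset {\<gamma>} (D i))" using R_D tile by simp
  then obtain \<gamma> d0 where gd: "\<gamma> \<in> D (Suc i)" "\<gamma> \<in> G i" "d0 \<in> D i" "R (Suc i) u = \<gamma> + d0"
    unfolding sumset_def by blast
  have "u - R (Suc i) u \<in> G i" using R_G[of "Suc i" u] G_mono[of i "Suc i"] i1 by auto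
  then have "(u - R (Suc i) u) + \<gamma> \<in> G i" using G_add gd(2) by blast
  moreover have "(u - R (Suc i) u) + \<gamma> = u - d0" using gd(4) by simp
  ultimately have "u - d0 \<in> G i" by simp
  then have d0: "d0 = R i u" using R_unique[OF i1 gd(3)] by simp
  have c: "\<gamma> + R i u' \<in> D (Suc i)"
  proof -
    have "\<gamma> + R i u' \<in> sumset {\<gamma>} (D i)" unfolding sumset_def using R_D[OF i1] by blast
    then show ?thesis using tile gd(1,2) by blast
  qed
  have "u' - (\<gamma> + R i u') = u - R (Suc i) u"
  proof -
    have "R i u' = R i u - (u - u')" using eq by (simp add: algebra_simps)
    then show ?thesis using gd(4) d0 by (simp add: algebra_simps)
  qed
  then have "u' - (\<gamma> + R i u') \<in> G (Suc i)" using R_G by simp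
  then have "R (Suc i) u' = \<gamma> + R i u'" using R_unique[OF _ c] by simp
  then show ?thesis using gd(4) d0 eq by (simp add: algebra_simps)
qed

lemma R_all: assumes "Suc K \<le> i" "R (Suc K) u - R (Suc K) u' = u - u'"
  shows "R i u - R i u' = u - u'"
  using assms(1)
proof (induction i rule: dec_induct)
  case base then show ?case using assms(2) by simp
next
  case (step n) then show ?case using R_step[of n u u'] by simp
qed

lemma A_same: assumes "i \<ge> 1" "R i u - R i u' = u - u'" "R (Suc i) u - R (Suc i) u' = u - u'"
  shows "(u \<in> A i) = (u' \<in> A i)"
proof -
  have "(R (Suc i) u = R i u) = (R (Suc i) u' = R i u')"
  proof -
    have "R (Suc i) u = R (Suc i) u' + (u - u')" "R i u = R i u' + (u - u')"
      using assms(2,3) by (simp_all add: algebra_simps)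
    then show ?thesis by simp
  qed
  then show ?thesis using A_R[OF assms(1)] by simp
qed

lemma keyB:
  assumes yX: "y \<in> X" and yOff: "Off y K w"
    and Nh: "\<forall>j\<le>K. h - w \<notin> A j" and Nh': "\<forall>j\<le>K. h' - w \<notin> A j"
    and Req: "R (Suc K) (h - w) - R (Suc K) (h' - w) = h - h'"
  shows "y h = y h'"
proof -
  define W where "W = D (Suc (Suc K)) \<union> {h, h'}"
  have "finite W" unfolding W_def using finite_D by simp
  then obtain c where c: "\<forall>v\<in>W. y v = shift c eta v" using X_approx[OF yX] by blast
  have agree: "\<forall>v\<in>D (Suc (Suc K)). y v = shift c eta v" using c W_def by simp
  have gK: "w - c \<in> G (Suc K)" using loc[OF yOff Off_eta[of c "Suc K"] agree] .
  define u where "u = h - c"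
  define u' where "u' = h' - c"
  have uu: "u = (h - w) + (w - c)" "u' = (h' - w) + (w - c)" unfolding u_def u'_def by simp_all
  have low: "u \<notin> A i \<and> u' \<notin> A i" if "i \<le> K" for i
    using A_per2[OF gK that, of "h - w"] A_per2[OF gK that, of "h' - w"] Nh Nh' that uu by simp
  have b1: "R (Suc K) u = R (Suc K) (h - w)"
  proof -
    have "h - w - R (Suc K) (h - w) \<in> G (Suc K)" using R_G by simp
    then have "(h - w - R (Suc K) (h - w)) + (w - c) \<in> G (Suc K)" using G_add gK by blast
    moreover have "(h - w - R (Suc K) (h - w)) + (w - c) = u - R (Suc K) (h - w)" unfolding u_def by simp
    ultimately show ?thesis using R_unique[of "Suc K" "R (Suc K) (h - w)" u] R_D by simp
  qed
  have b2: "R (Suc K) u' = R (Suc K) (h' - w)"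
  proof -
    have "h' - w - R (Suc K) (h' - w) \<in> G (Suc K)" using R_G by simp
    then have "(h' - w - R (Suc K) (h' - w)) + (w - c) \<in> G (Suc K)" using G_add gK by blast
    moreover have "(h' - w - R (Suc K) (h' - w)) + (w - c) = u' - R (Suc K) (h' - w)" unfolding u'_def by simp
    ultimately show ?thesis using R_unique[of "Suc K" "R (Suc K) (h' - w)" u'] R_D by simp
  qed
  have base: "R (Suc K) u - R (Suc K) u' = u - u'" using b1 b2 Req unfolding u_def u'_def by simp
  have allA: "(u \<in> A i) = (u' \<in> A i)" for i
  proof (cases "i \<le> K")
    case True then show ?thesis using low by blast
  next
    case False
    then have i: "Suc K \<le> i" "Suc K \<le> Suc i" "i \<ge> 1" by simp_all
    show ?thesis using A_same[OF i(3) R_all[OF i(1) base] R_all[OF i(2) base]] .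
  qed
  obtain j where j: "exact u j" using exact_ex by blast
  have j': "exact u' j" using j allA unfolding exact_def by simp
  have "y h = eta u" using c W_def unfolding u_def shift_def by simp
  moreover have "y h' = eta u'" using c W_def unfolding u'_def shift_def by simp
  ultimately show ?thesis using eta_exact[OF j] eta_exact[OF j'] by simp
qed

lemma caseA:
  fixes x :: "nat \<Rightarrow> (int^'r \<Rightarrow> nat)" and s :: nat
  assumes IN: "x \<in> IN_tuples s X" and xX: "\<forall>i<s. x i \<in> X" and ab: "a < s" "b < s"
    and da: "Off (x a) (Suc k) da" and db: "Off (x b) (Suc k) db" and ne: "da - db \<notin> G (Suc k)"
  shows False
proof -
  define W where "W = D (Suc (Suc k))"
  have fW: "finite W" unfolding W_def using finite_D by simp
  define U where "U i = X \<inter> {f. \<forall>w\<in>W. f w = x i w}" for i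
  have Uo: "\<forall>i<s. openin (top_of_set X) (U i) \<and> x i \<in> U i"
    unfolding U_def using open_cyl[OF fW] xX by auto
  have "\<forall>N::nat. \<exists>J. finite J \<and> N \<le> card J \<and> indep_set X U s J"
    using IN Uo unfolding IN_tuples_def by blast
  then obtain J where J: "finite J" "2 \<le> card J" "indep_set X U s J" by blast
  have "J \<noteq> {}" using J by auto
  then obtain g where g: "g \<in> J" by blast
  have cg: "card (J - {g}) \<ge> 1" using J g by simp
  have "J - {g} \<noteq> {}"
  proof
    assume e: "J - {g} = {}"
    have "card (J - {g}) = 0" by (simp only: e card.empty)
    then show False using cg by linarith
  qed
  then obtain g' where g': "g' \<in> J" "g' \<noteq> g" by blast
  have H: "c + h - d \<in> G (Suc k)"
    if "Off y k c" "shift h y \<in> U i" "Off (x i) (Suc k) d" for y c h i d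
  proof -
    have "\<forall>w\<in>D (Suc (Suc k)). shift h y w = x i w" using that(2) unfolding U_def W_def by simp
    from loc[OF Off_shift[OF that(1), of h] that(3) this] show ?thesis by simp
  qed
  have ex: "\<exists>y. y \<in> X \<and> shift g y \<in> U (t g) \<and> shift g' y \<in> U (t g')"
    if "t g < s" "t g' < s" for t
  proof -
    have "t \<in> {g, g'} \<rightarrow> {..<s}" using that by auto
    moreover have "{g, g'} \<subseteq> J" using g g' by auto
    ultimately have "(\<Inter>v\<in>{g, g'}. {y \<in> X. shift v y \<in> U (t v)}) \<noteq> {}"
      using J(3) unfolding indep_set_def by blast
    then show ?thesis by auto
  qed
  obtain y where y: "y \<in> X" "shift g y \<in> U a" "shift g' y \<in> U a"
    using ex[of "\<lambda>_. a"] ab by auto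
  obtain c where c: "Off y k c" using X_Off[OF y(1)] by blast
  have e1: "c + g - da \<in> G (Suc k)" using H[OF c y(2) da] .
  have e2: "c + g' - da \<in> G (Suc k)" using H[OF c y(3) da] .
  obtain y' where y': "y' \<in> X" "shift g y' \<in> U a" "shift g' y' \<in> U b"
    using ex[of "\<lambda>v. if v = g then a else b"] ab g' by auto
  obtain c' where c': "Off y' k c'" using X_Off[OF y'(1)] by blast
  have e3: "c' + g - da \<in> G (Suc k)" using H[OF c' y'(2) da] .
  have e4: "c' + g' - db \<in> G (Suc k)" using H[OF c' y'(3) db] .
  have "da - db = ((c' + g' - db) - (c' + g - da)) + ((c + g - da) - (c + g' - da))"
    by (simp add: algebra_simps)
  moreover have "((c' + g' - db) - (c' + g - da)) + ((c + g - da) - (c + g' - da)) \<in> G (Suc k)"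
    using G_add G_diff e1 e2 e3 e4 by blast
  ultimately show False using ne by simp
qed


lemma Rcoord: "R (Suc K) (h - w) $ l = (h $ l + (q1 l (Suc K) - w $ l)) mod p l (Suc K) - q1 l (Suc K)"
proof -
  have "h $ l - w $ l + q1 l (Suc K) = h $ l + (q1 l (Suc K) - w $ l)" by simp
  then show ?thesis unfolding R_def by (simp only: vec_lambda_beta vector_minus_component)
qed

lemma caseB:
  fixes x :: "nat \<Rightarrow> (int^'r \<Rightarrow> nat)" and s :: nat
  assumes xX: "\<forall>i<s. x i \<in> X" and inj: "inj_on x {..<s}" and s_big: "s > m ^ (2 ^ CARD('r))"
    and same: "\<forall>a<s. \<forall>b<s. \<forall>k da db. Off (x a) (Suc k) da \<longrightarrow> Off (x b) (Suc k) db \<longrightarrow> da - db \<in> G (Suc k)"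
  shows False
proof -
  have s0: "0 < s" using s_big by simp
  define \<omega> where "\<omega> k = (SOME d. Off (x 0) (Suc k) d)" for k
  have \<omega>0: "Off (x 0) (Suc k) (\<omega> k)" for k
  proof -
    have "\<exists>d. Off (x 0) (Suc k) d" using X_Off xX s0 by blast
    then show ?thesis unfolding \<omega>_def by (rule someI_ex)
  qed
  have offall: "Off (x a) k (\<omega> k)" if as: "a < s" for a k
  proof -
    have "x a \<in> X" using xX as by blast
    then obtain da where da: "Off (x a) (Suc k) da" using X_Off by blast
    have "da - \<omega> k \<in> G (Suc k)" using same[rule_format, OF as s0 da \<omega>0] .
    from G_uminus[OF this] have "\<omega> k - da \<in> G (Suc k)" by simp
    then show ?thesis by (rule Off_class[OF Off_mono[OF da]])
  qed
  define N where "N h \<longleftrightarrow> (\<forall>k. \<forall>j\<le>k. h - \<omega> k \<notin> A j)" for h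
  have det: "x a h = x b h" if "\<not> N h" "a < s" "b < s" for a b h
  proof -
    have "\<exists>k j. j \<le> k \<and> h - \<omega> k \<in> A j" using that(1) unfolding N_def by auto
    then obtain k j where kj: "j \<le> k" "h - \<omega> k \<in> A j" by blast
    define j0 where "j0 = (LEAST j. h - \<omega> k \<in> A j)"
    have "h - \<omega> k \<in> A j0" unfolding j0_def using kj(2) by (rule LeastI)
    moreover have "\<forall>i<j0. h - \<omega> k \<notin> A i"
      unfolding j0_def using not_less_Least[of _ "\<lambda>j. h - \<omega> k \<in> A j"] by blast
    ultimately have ex: "exact (h - \<omega> k) j0" unfolding exact_def by blast
    have j0k: "j0 \<le> k" using Least_le[of "\<lambda>j. h - \<omega> k \<in> A j" j] kj unfolding j0_def by simp
    have oa: "Off (x a) k (\<omega> k)" using offall[OF that(2)] .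
    have ob: "Off (x b) k (\<omega> k)" using offall[OF that(3)] .
    have "x a ((h - \<omega> k) + \<omega> k) = \<alpha> (Suc j0)" using oa[unfolded Off_def, rule_format, OF j0k ex] .
    moreover have "x b ((h - \<omega> k) + \<omega> k) = \<alpha> (Suc j0)" using ob[unfolded Off_def, rule_format, OF j0k ex] .
    ultimately show ?thesis by simp
  qed
  define pairs where "pairs = {ab. fst ab < s \<and> snd ab < s \<and> fst ab \<noteq> snd ab}"
  have fpairs: "finite pairs"
  proof -
    have "pairs \<subseteq> {..<s} \<times> {..<s}" unfolding pairs_def by auto
    then show ?thesis using finite_subset by blast
  qed
  define wit where "wit ab = (SOME h. x (fst ab) h \<noteq> x (snd ab) h)" for ab
  have witp: "x (fst ab) (wit ab) \<noteq> x (snd ab) (wit ab)" if "ab \<in> pairs" for ab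
  proof -
    have "x (fst ab) \<noteq> x (snd ab)" using inj that unfolding pairs_def inj_on_def by auto
    then have "\<exists>h. x (fst ab) h \<noteq> x (snd ab) h" by (auto simp: fun_eq_iff)
    then show ?thesis unfolding wit_def by (rule someI_ex)
  qed
  define P where "P = wit ` pairs"
  have fP: "finite P" unfolding P_def using fpairs by simp
  define M :: int where "M = (\<Sum>h\<in>P. \<Sum>l\<in>UNIV. \<bar>h $ l\<bar>)"
  have M0: "0 \<le> M" unfolding M_def by (intro sum_nonneg) auto
  have hM: "\<bar>h $ l\<bar> \<le> M" if "h \<in> P" for h l
  proof -
    have "\<bar>h $ l\<bar> \<le> (\<Sum>l\<in>UNIV. \<bar>h $ l\<bar>)" by (rule member_le_sum) auto
    also have "\<dots> \<le> M" unfolding M_def using that fP by (intro member_le_sum) (auto intro: sum_nonneg)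
    finally show ?thesis .
  qed
  define K where "K = nat M"
  have KM: "int K = M" unfolding K_def using M0 by simp
  have pK: "0 < p l (Suc K)" "2 * M < p l (Suc K)" for l
    using p_pos[of "Suc K" l] p_big[of "Suc K" l] KM by simp_all
  define z where "z l = q1 l (Suc K) - \<omega> K $ l" for l
  define \<phi> where "\<phi> h = {l. (h $ l + z l) mod p l (Suc K) - h $ l \<noteq> z l mod p l (Suc K)}" for h
  have phi_eq: "R (Suc K) (h - \<omega> K) - R (Suc K) (h' - \<omega> K) = h - h'"
    if "h \<in> P" "h' \<in> P" "\<phi> h = \<phi> h'" for h h'
  proof -
    have "(R (Suc K) (h - \<omega> K) - R (Suc K) (h' - \<omega> K)) $ l = (h - h') $ l" for l
    proof -
      have same_l: "((h $ l + z l) mod p l (Suc K) - h $ l \<noteq> z l mod p l (Suc K)) =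
          ((h' $ l + z l) mod p l (Suc K) - h' $ l \<noteq> z l mod p l (Suc K))"
      proof -
        have "(l \<in> \<phi> h) = (l \<in> \<phi> h')" using that(3) by simp
        then show ?thesis by (simp only: \<phi>_def mem_Collect_eq)
      qed
      have "(h $ l + z l) mod p l (Suc K) - h $ l = (h' $ l + z l) mod p l (Suc K) - h' $ l"
        by (rule coord_arith[OF pK(1) pK(2) hM[OF that(1)] hM[OF that(2)] same_l])
      then show ?thesis using Rcoord[of K h "\<omega> K" l] Rcoord[of K h' "\<omega> K" l] unfolding z_def by simp
    qed
    then show ?thesis by (simp add: vec_eq_iff)
  qed
  define Nset where "Nset = {h \<in> P. N h}"
  define rep where "rep S = (SOME h. h \<in> Nset \<and> \<phi> h = S)" for S
  have repp: "rep (\<phi> h) \<in> Nset \<and> \<phi> (rep (\<phi> h)) = \<phi> h" if "h \<in> Nset" for h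
  proof -
    have "\<exists>h'. h' \<in> Nset \<and> \<phi> h' = \<phi> h" using that by blast
    then show ?thesis unfolding rep_def by (rule someI_ex)
  qed
  define Q where "Q = rep ` (\<phi> ` Nset)"
  have fN: "finite Nset" unfolding Nset_def using fP by simp
  have fQ: "finite Q" unfolding Q_def using fN by simp
  have cardQ: "card Q \<le> 2 ^ CARD('r)"
  proof -
    have "card Q \<le> card (\<phi> ` Nset)" unfolding Q_def using fN by (intro card_image_le) simp
    also have "\<dots> \<le> card (UNIV :: 'r set set)" by (intro card_mono) auto
    also have "\<dots> = 2 ^ CARD('r)" using card_Pow[of "UNIV :: 'r set"] by simp
    finally show ?thesis .
  qed
  have eqrep: "x a h = x a (rep (\<phi> h))" if "h \<in> Nset" "a < s" for a h
  proof -
    have r: "rep (\<phi> h) \<in> Nset" "\<phi> (rep (\<phi> h)) = \<phi> h" using repp[OF that(1)] by auto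
    have hP: "h \<in> P" "N h" using that(1) unfolding Nset_def by auto
    have rP: "rep (\<phi> h) \<in> P" "N (rep (\<phi> h))" using r(1) unfolding Nset_def by auto
    show ?thesis
    proof (rule keyB[of "x a" K "\<omega> K"])
      show "x a \<in> X" using xX that(2) by simp
      show "Off (x a) K (\<omega> K)" using offall[OF that(2)] .
      show "\<forall>j\<le>K. h - \<omega> K \<notin> A j" using hP(2) unfolding N_def by blast
      show "\<forall>j\<le>K. rep (\<phi> h) - \<omega> K \<notin> A j" using rP(2) unfolding N_def by blast
      show "R (Suc K) (h - \<omega> K) - R (Suc K) (rep (\<phi> h) - \<omega> K) = h - rep (\<phi> h)"
        using phi_eq[OF hP(1) rP(1)] r(2) by simp
    qed
  qed
  define F where "F a = restrict (x a) Q" for a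
  have injF: "inj_on F {..<s}"
  proof (rule inj_onI)
    fix a b assume ab: "a \<in> {..<s}" "b \<in> {..<s}" "F a = F b"
    show "a = b"
    proof (rule ccontr)
      assume "a \<noteq> b"
      then have abp: "(a, b) \<in> pairs" using ab unfolding pairs_def by simp
      define h where "h = wit (a, b)"
      have hd: "x a h \<noteq> x b h" using witp[OF abp] unfolding h_def by simp
      have hP: "h \<in> P" unfolding h_def P_def using abp by blast
      show False
      proof (cases "N h")
        case True
        then have hN: "h \<in> Nset" unfolding Nset_def using hP by simp
        have rQ: "rep (\<phi> h) \<in> Q" unfolding Q_def using hN by blast
        have "F a (rep (\<phi> h)) = F b (rep (\<phi> h))" using ab(3) by simp
        then have "x a (rep (\<phi> h)) = x b (rep (\<phi> h))"
          using rQ unfolding F_def by simp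
        then show False using eqrep[OF hN, of a] eqrep[OF hN, of b] ab hd by simp
      next
        case False
        then show False using det[of h a b] ab hd by simp
      qed
    qed
  qed
  have Fin: "F ` {..<s} \<subseteq> Q \<rightarrow>\<^sub>E {1..m}"
    unfolding F_def using X_vals xX by auto
  have "card {..<s} \<le> card (Q \<rightarrow>\<^sub>E {1..m})"
    using card_inj_on_le[OF injF Fin] fQ by (simp add: finite_PiE)
  also have "\<dots> = m ^ card Q" using card_PiE[OF fQ, of "\<lambda>_. {1..m}"] by simp
  also have "\<dots> \<le> m ^ (2 ^ CARD('r))" using cardQ m2 by (intro power_increasing) auto
  finally have "s \<le> m ^ (2 ^ CARD('r))" by simp
  then show False using s_big by simp
qed

end

theorem corollary4p9:
  fixes p q1 q2 :: "'r::finite \<Rightarrow> nat \<Rightarrow> int"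
    and m s :: nat
    and \<alpha> :: "nat \<Rightarrow> nat"
  assumes r2: "CARD('r) \<ge> 2"
    and p_pos: "\<And>j i. i \<ge> 1 \<Longrightarrow> p j i > 0"
    and p_incr: "\<And>j i. i \<ge> 1 \<Longrightarrow> p j i < p j (i + 1)"
    and p_dvd: "\<And>j i. i \<ge> 1 \<Longrightarrow> p j i dvd p j (i + 1)"
    and p_big: "\<And>j i. i \<ge> 1 \<Longrightarrow> p j i > 2 * int i + 1"
    and index: "\<And>i. i \<ge> 1 \<Longrightarrow>
       (\<Prod>j\<in>UNIV. real_of_int (p j (i + 1)) / real_of_int (p j i))
         > 1 / (1 - 2 powr (- ((1/2) ^ (i + 1))))"
    and q1_big: "\<And>j i. i \<ge> 1 \<Longrightarrow> q1 j i > int i"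
    and q2_big: "\<And>j i. i \<ge> 1 \<Longrightarrow> q2 j i > int i"
    and q_sum: "\<And>j i. i \<ge> 1 \<Longrightarrow> q1 j i + q2 j i = p j i"
    and D_zero: "\<And>i. i \<ge> 1 \<Longrightarrow> 0 \<in> Dom q1 q2 i"
    and D_mono: "\<And>i. i \<ge> 1 \<Longrightarrow> Dom q1 q2 i \<subseteq> Dom q1 q2 (i + 1)"
    and D_union: "(\<Union>i\<in>{1..}. Dom q1 q2 i) = UNIV"
    and D_tile: "\<And>i. i \<ge> 2 \<Longrightarrow>
       Dom q1 q2 i = (\<Union>\<gamma>\<in>Dom q1 q2 i \<inter> Gam p (i - 1). sumset {\<gamma>} (Dom q1 q2 (i - 1)))"
    and m2: "m \<ge> 2"
    and alpha_range: "\<And>i. i \<ge> 1 \<Longrightarrow> \<alpha> i \<in> {1..m}"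
    and alpha_mod: "\<And>i. i \<ge> 1 \<Longrightarrow> \<alpha> i mod m = i mod m"
    and s_big: "s > m ^ (2 ^ CARD('r))"
  shows "IN_tuples s (orbit_closure (toeplitz_eta p q1 q2 \<alpha>)) - diag_tuples s = {}"
proof -
  interpret toep p q1 q2 m \<alpha>
    by unfold_locales (fact assms)+
  show ?thesis
  proof (rule ccontr)
    assume "IN_tuples s (orbit_closure (toeplitz_eta p q1 q2 \<alpha>)) - diag_tuples s \<noteq> {}"
    then obtain x where IN: "x \<in> IN_tuples s X" and nd: "x \<notin> diag_tuples s" by blast
    have xX: "\<forall>i<s. x i \<in> X" using IN unfolding IN_tuples_def by (auto simp: PiE_iff)
    have inj: "inj_on x {..<s}" using nd unfolding diag_tuples_def inj_on_def by auto
    show False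
    proof (cases "\<exists>a<s. \<exists>b<s. \<exists>k da db. Off (x a) (Suc k) da \<and> Off (x b) (Suc k) db \<and> da - db \<notin> G (Suc k)")
      case True
      then obtain a b k da db where ab: "a < s" "b < s" "Off (x a) (Suc k) da" "Off (x b) (Suc k) db"
        "da - db \<notin> G (Suc k)" by blast
      show False by (rule caseA[OF IN xX ab])
    next
      case False
      then have same: "\<forall>a<s. \<forall>b<s. \<forall>k da db. Off (x a) (Suc k) da \<longrightarrow> Off (x b) (Suc k) db \<longrightarrow> da - db \<in> G (Suc k)"
        by blast
      show False by (rule caseB[OF xX inj s_big same])
    qed
  qed
qed

end
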